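(* Let $G_0^*$ be a $(k,r)$-regular hypergraph on $n$ vertices, and list the eigenvalues of $A(G_0^* )$ with multiplicity as $\lambda_1=r(k-1),\lambda_2,\dots,\lambda_n$. Let $b=\binom{n-1}{k-2}$, $N_j=n(n+1)^{j-1}$, and define matrices recursively by $\mathcal{A}^{(1)}=A(G_0^* )$ and, for $m\ge 2$, $$\mathcal{A}^{(m)}=\begin{bmatrix}\mathcal{A}^{(m-1)} & b\,(J_{1,n}\otimes I_{N_{m-1}})\\ b\,(J_{n,1}\otimes I_{N_{m-1}}) & A(G_0^* )\otimes I_{N_{m-1}}\end{bmatrix}$$ (an $N_m\times N_m$ matrix; it is the corona matrix of the hypergraph represented by $\mathcal{A}^{(m-1)}$ with $G_0^*$). Define $\phi_\pm(x)=\frac{x+r(k-1)\pm\sqrt{(x-r(k-1))^2+4nb^2}}{2}$, and for real $x$ define multisets $\Phi^0(x)=\{x\}$ and $\Phi^j(x)=\biguplus_{y\in\Phi^{j-1}(x)}\{\phi_+(y),\phi_-(y)\}$ for $j\ge1$ (so $\Phi^j(x)$ has $2^j$ elements counted with multiplicity). Then for every $m\ge1$ the spectrum of $\mathcal{A}^{(m)}$, as a multiset, is $$\biguplus_{i=1}^n\Phi^{m-1}(\lambda_i)\ \uplus\ \biguplus_{j=0}^{m-2}\ \biguplus_{i=2}^n\ \big(\Phi^j(\lambda_i)\text{ taken } n(n+1)^{m-j-2}\text{ times}\big).$$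
   Context: All hypergraphs are finite and simple: a hypergraph $G^*=(V,E)$ consists of a finite vertex set $V$ and a set $E$ of subsets of $V$ (hyperedges), each of size at least $2$. It is $k$-uniform if every hyperedge has exactly $k$ elements, and $(k,r)$-regular if it is $k$-uniform and every vertex lies in exactly $r$ hyperedges. For a hypergraph with vertices $v_1,\dots,v_n$, the adjacency matrix $A(G^* )$ is the $n\times n$ matrix whose $(i,j)$ entry, for $i\ne j$, is the number of hyperedges containing both $v_i$ and $v_j$, and whose diagonal entries are $0$. $J_{a,b}$ is the all-ones $a\times b$ matrix, $I_N$ the identity, $\otimes$ the Kronecker product, $\uplus$ multiset union. Binomial coefficients $\binom{x}{y}$ with integers $x\ge 0$ and $y$ are $0$ when $y<0$ or $y>x$. *)

theory Defs
  imports "Jordan_Normal_Form.Char_Poly" "HOL-Library.Multiset"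
begin

definition hypergraph :: "nat \<Rightarrow> nat set set \<Rightarrow> bool" where
  "hypergraph n E \<longleftrightarrow> (\<forall>e\<in>E. e \<subseteq> {0..<n} \<and> card e \<ge> 2)"

definition kr_regular :: "nat \<Rightarrow> nat \<Rightarrow> nat \<Rightarrow> nat set set \<Rightarrow> bool" where
  "kr_regular k r n E \<longleftrightarrow> hypergraph n E \<and> (\<forall>e\<in>E. card e = k)
     \<and> (\<forall>v<n. card {e\<in>E. v \<in> e} = r)"

definition hyp_adj :: "nat \<Rightarrow> nat set set \<Rightarrow> real mat" where
  "hyp_adj n E = mat n n (\<lambda>(i,j). if i = j then 0 else real (card {e\<in>E. i \<in> e \<and> j \<in> e}))"

definition ones_mat :: "nat \<Rightarrow> nat \<Rightarrow> real mat" where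
  "ones_mat a c = mat a c (\<lambda>_. 1)"

definition kron :: "real mat \<Rightarrow> real mat \<Rightarrow> real mat" where
  "kron A B = mat (dim_row A * dim_row B) (dim_col A * dim_col B)
     (\<lambda>(i,j). A $$ (i div dim_row B, j div dim_col B) * B $$ (i mod dim_row B, j mod dim_col B))"

text \<open>corona_iter A b m is the matrix \<A>^{(m+1)} of the paper.\<close>
primrec corona_iter :: "real mat \<Rightarrow> real \<Rightarrow> nat \<Rightarrow> real mat" where
  "corona_iter A b 0 = A"
| "corona_iter A b (Suc m) =
     (let M = corona_iter A b m; N = dim_row M; n = dim_row A in
      four_block_mat M (b \<cdot>\<^sub>m kron (ones_mat 1 n) (1\<^sub>m N))
                       (b \<cdot>\<^sub>m kron (ones_mat n 1) (1\<^sub>m N))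
                       (kron A (1\<^sub>m N)))"

definition is_spectrum :: "real mat \<Rightarrow> real multiset \<Rightarrow> bool" where
  "is_spectrum A M \<longleftrightarrow> char_poly A = (\<Prod>a\<in>#M. [:-a, 1:])"

primrec Phi :: "(real \<Rightarrow> real) \<Rightarrow> (real \<Rightarrow> real) \<Rightarrow> nat \<Rightarrow> real \<Rightarrow> real multiset" where
  "Phi fp fm 0 x = {#x#}"
| "Phi fp fm (Suc j) x = (\<Sum>y\<in>#Phi fp fm j x. {#fp y, fm y#})"

end

theory Submission
  imports Defs "Jordan_Normal_Form.Schur_Decomposition"
begin


lemma sum_div_mod_split:
  fixes g :: "nat \<Rightarrow> 'a::comm_monoid_add"
  shows "(\<Sum>k<c * N. g k) = (\<Sum>a<c. \<Sum>t<N. g (a * N + t))"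
proof -
  have "(\<Sum>k<c * N. g k) = (\<Sum>a<c. sum g {a * N..<a * N + N})"
    by (rule sum.nat_group[symmetric])
  also have "\<dots> = (\<Sum>a<c. \<Sum>t<N. g (a * N + t))"
  proof (rule sum.cong[OF refl])
    fix a
    show "sum g {a * N..<a * N + N} = (\<Sum>t<N. g (a * N + t))"
    proof -
      have "sum g {a*N..<a*N+N} = sum (\<lambda>t. g (t + a*N)) {0..<N}"
        using sum.shift_bounds_nat_ivl[of g 0 "a*N" N] by (simp add: add.commute)
      then show ?thesis by (simp add: atLeast0LessThan add.commute)
    qed
  qed
  finally show ?thesis .
qed

lemma prod_div_mod_split:
  fixes g :: "nat \<Rightarrow> 'a::comm_monoid_mult"
  shows "(\<Prod>k<c * N. g k) = (\<Prod>a<c. \<Prod>t<N. g (a * N + t))"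
proof -
  have "(\<Prod>k<c * N. g k) = (\<Prod>a<c. prod g {a * N..<a * N + N})"
    by (rule prod.nat_group[symmetric])
  also have "\<dots> = (\<Prod>a<c. \<Prod>t<N. g (a * N + t))"
  proof (rule prod.cong[OF refl])
    fix a
    show "prod g {a * N..<a * N + N} = (\<Prod>t<N. g (a * N + t))"
    proof -
      have "prod g {a*N..<a*N+N} = prod (\<lambda>t. g (t + a*N)) {0..<N}"
        using prod.shift_bounds_nat_ivl[of g 0 "a*N" N] by (simp add: add.commute)
      then show ?thesis by (simp add: atLeast0LessThan add.commute)
    qed
  qed
  finally show ?thesis .
qed

lemma kron_carrier[simp]: "dim_row (kron A B) = dim_row A * dim_row B" "dim_col (kron A B) = dim_col A * dim_col B"
  unfolding kron_def by auto

lemma kron_carrier_mat: "A \<in> carrier_mat a c \<Longrightarrow> B \<in> carrier_mat d e \<Longrightarrow> kron A B \<in> carrier_mat (a*d) (c*e)"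
  unfolding kron_def carrier_mat_def by auto

lemma kron_id_index:
  assumes "i < dim_row A * N" "j < dim_col A * N"
  shows "kron A (1\<^sub>m N) $$ (i,j) = A $$ (i div N, j div N) * (if i mod N = j mod N then 1 else 0)"
proof -
  have N: "N > 0" using assms by (cases N) auto
  show ?thesis using assms N unfolding kron_def by (auto simp: index_one_mat)
qed

lemma kron_mult_id:
  assumes A: "A \<in> carrier_mat a c" and B: "B \<in> carrier_mat c d"
  shows "kron A (1\<^sub>m N) * kron B (1\<^sub>m N) = kron (A * B) (1\<^sub>m N)"
proof (rule eq_matI)
  show "dim_row (kron A (1\<^sub>m N) * kron B (1\<^sub>m N)) = dim_row (kron (A * B) (1\<^sub>m N))"
    using A B by simp
  show "dim_col (kron A (1\<^sub>m N) * kron B (1\<^sub>m N)) = dim_col (kron (A * B) (1\<^sub>m N))"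
    using A B by simp
  fix i j assume i: "i < dim_row (kron (A * B) (1\<^sub>m N))" and j: "j < dim_col (kron (A * B) (1\<^sub>m N))"
  have ia: "i < a * N" and jd: "j < d * N" using i j A B by auto
  have N: "N > 0" using ia by (cases N) auto
  have idiv: "i div N < a" using ia by (simp add: less_mult_imp_div_less)
  have jdiv: "j div N < d" using jd by (simp add: less_mult_imp_div_less)
  have "(kron A (1\<^sub>m N) * kron B (1\<^sub>m N)) $$ (i, j) =
     (\<Sum>k<c * N. kron A (1\<^sub>m N) $$ (i, k) * kron B (1\<^sub>m N) $$ (k, j))"
    using ia jd A B by (simp add: scalar_prod_def atLeast0LessThan[symmetric] row_def col_def)
  also have "\<dots> = (\<Sum>x<c. \<Sum>t<N. kron A (1\<^sub>m N) $$ (i, x*N+t) * kron B (1\<^sub>m N) $$ (x*N+t, j))"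
    by (rule sum_div_mod_split)
  also have "\<dots> = (\<Sum>x<c. A $$ (i div N, x) * B $$ (x, j div N) * (if i mod N = j mod N then 1 else 0))"
  proof (rule sum.cong[OF refl])
    fix x assume x: "x \<in> {..<c}"
    have "(\<Sum>t<N. kron A (1\<^sub>m N) $$ (i, x*N+t) * kron B (1\<^sub>m N) $$ (x*N+t, j))
      = (\<Sum>t<N. if t = i mod N then A $$ (i div N, x) * B $$ (x, j div N) * (if i mod N = j mod N then 1 else 0) else 0)"
    proof (rule sum.cong[OF refl])
      fix t assume t: "t \<in> {..<N}"
      have xt1: "x * N + t < (x+1) * N" using t by simp
      have xt2: "(x+1) * N \<le> c * N" using x by (intro mult_le_mono1) simp
      have xt: "x * N + t < c * N" using xt1 xt2 by linarith
      have d1: "(x*N+t) div N = x" and m1: "(x*N+t) mod N = t" using t N by auto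
      show "kron A (1\<^sub>m N) $$ (i, x*N+t) * kron B (1\<^sub>m N) $$ (x*N+t, j)
        = (if t = i mod N then A $$ (i div N, x) * B $$ (x, j div N) * (if i mod N = j mod N then 1 else 0) else 0)"
        using kron_id_index[of i A N "x*N+t"] kron_id_index[of "x*N+t" B N j] A B ia jd xt d1 m1
        by auto
    qed
    also have "\<dots> = A $$ (i div N, x) * B $$ (x, j div N) * (if i mod N = j mod N then 1 else 0)"
      using N by (simp add: sum.delta')
    finally show "(\<Sum>t<N. kron A (1\<^sub>m N) $$ (i, x*N+t) * kron B (1\<^sub>m N) $$ (x*N+t, j)) =
       A $$ (i div N, x) * B $$ (x, j div N) * (if i mod N = j mod N then 1 else 0)" .
  qed
  also have "\<dots> = (A * B) $$ (i div N, j div N) * (if i mod N = j mod N then 1 else 0)"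
    using A B idiv jdiv by (simp add: scalar_prod_def sum_distrib_right atLeast0LessThan row_def col_def)
  also have "\<dots> = kron (A * B) (1\<^sub>m N) $$ (i, j)"
    using kron_id_index[of i "A*B" N j] ia jd A B by simp
  finally show "(kron A (1\<^sub>m N) * kron B (1\<^sub>m N)) $$ (i, j) = kron (A * B) (1\<^sub>m N) $$ (i, j)" .
qed



lemma kron_id_one: "kron (1\<^sub>m n) (1\<^sub>m N) = 1\<^sub>m (n*N)"
proof (rule eq_matI)
  fix i j assume i: "i < dim_row (1\<^sub>m (n*N))" and j: "j < dim_col (1\<^sub>m (n*N))"
  have N: "N > 0" using i by (cases N) auto
  have ij: "i div N = j div N \<Longrightarrow> i mod N = j mod N \<Longrightarrow> i = j" by (metis div_mult_mod_eq)
  show "kron (1\<^sub>m n) (1\<^sub>m N) $$ (i, j) = 1\<^sub>m (n * N) $$ (i, j)"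
    using kron_id_index[of i "1\<^sub>m n" N j] i j N ij
    by (auto simp: less_mult_imp_div_less)
qed auto

lemma kron_minus_id: assumes "A \<in> carrier_mat a c" "B \<in> carrier_mat a c"
  shows "kron (A - B) (1\<^sub>m N) = kron A (1\<^sub>m N) - kron B (1\<^sub>m N)"
proof (rule eq_matI)
  fix i j assume i: "i < dim_row (kron A (1\<^sub>m N) - kron B (1\<^sub>m N))"
    and j: "j < dim_col (kron A (1\<^sub>m N) - kron B (1\<^sub>m N))"
  have ia: "i < a * N" and jc: "j < c * N" using i j assms by auto
  have idiv: "i div N < a" using ia by (simp add: less_mult_imp_div_less)
  have jdiv: "j div N < c" using jc by (simp add: less_mult_imp_div_less)
  show "kron (A - B) (1\<^sub>m N) $$ (i, j) = (kron A (1\<^sub>m N) - kron B (1\<^sub>m N)) $$ (i, j)"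
    using kron_id_index[of i "A - B" N j] kron_id_index[of i A N j] kron_id_index[of i B N j]
      ia jc idiv jdiv assms by (auto simp: algebra_simps)
qed (insert assms, auto)

lemma kron_smult_id: "kron (x \<cdot>\<^sub>m A) (1\<^sub>m N) = x \<cdot>\<^sub>m kron A (1\<^sub>m N)"
proof (rule eq_matI)
  fix i j assume i: "i < dim_row (x \<cdot>\<^sub>m kron A (1\<^sub>m N))"
    and j: "j < dim_col (x \<cdot>\<^sub>m kron A (1\<^sub>m N))"
  have ia: "i < dim_row A * N" and jc: "j < dim_col A * N" using i j by auto
  have idiv: "i div N < dim_row A" using ia by (simp add: less_mult_imp_div_less)
  have jdiv: "j div N < dim_col A" using jc by (simp add: less_mult_imp_div_less)
  show "kron (x \<cdot>\<^sub>m A) (1\<^sub>m N) $$ (i, j) = (x \<cdot>\<^sub>m kron A (1\<^sub>m N)) $$ (i, j)"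
    using kron_id_index[of i "x \<cdot>\<^sub>m A" N j] kron_id_index[of i A N j]
      ia jc idiv jdiv by auto
qed auto

lemma kron_upper_triangular: assumes U: "U \<in> carrier_mat n n" and ut: "upper_triangular U"
  shows "upper_triangular (kron U (1\<^sub>m N))"
  unfolding upper_triangular_def
proof (intro allI impI)
  fix i j assume i: "i < dim_row (kron U (1\<^sub>m N))" and ji: "j < i"
  have ia: "i < n * N" using i U by auto
  have ja: "j < n * N" using ia ji by auto
  have idiv: "i div N < n" using ia by (simp add: less_mult_imp_div_less)
  have jdiv: "j div N < n" using ja by (simp add: less_mult_imp_div_less)
  have "j div N \<le> i div N" using ji by (simp add: div_le_mono)
  moreover have "j div N = i div N \<Longrightarrow> j mod N \<noteq> i mod N"
    using ji by (metis div_mult_mod_eq less_irrefl)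
  ultimately have "j div N < i div N \<or> j mod N \<noteq> i mod N" by auto
  then show "kron U (1\<^sub>m N) $$ (i, j) = 0"
    using kron_id_index[of i U N j] ia ja U ut idiv unfolding upper_triangular_def by auto
qed

lemma det_kron_upper: assumes U: "U \<in> carrier_mat n n" and ut: "upper_triangular U"
  shows "det (kron U (1\<^sub>m N)) = det U ^ N"
proof -
  have c: "kron U (1\<^sub>m N) \<in> carrier_mat (n*N) (n*N)" using kron_carrier_mat[OF U, of "1\<^sub>m N" N N] by simp
  have "det (kron U (1\<^sub>m N)) = (\<Prod>i<n*N. kron U (1\<^sub>m N) $$ (i,i))"
    using det_upper_triangular[OF kron_upper_triangular[OF U ut] c] prod_list_diag_prod[of "kron U (1\<^sub>m N)"] U
    by (simp add: atLeast0LessThan carrier_matD)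
  also have "\<dots> = (\<Prod>a<n. \<Prod>t<N. kron U (1\<^sub>m N) $$ (a*N+t,a*N+t))" by (rule prod_div_mod_split)
  also have "\<dots> = (\<Prod>a<n. U $$ (a,a) ^ N)"
  proof (rule prod.cong[OF refl])
    fix a assume a: "a \<in> {..<n}"
    have "(\<Prod>t<N. kron U (1\<^sub>m N) $$ (a*N+t,a*N+t)) = (\<Prod>t<N. U $$ (a,a))"
    proof (rule prod.cong[OF refl])
      fix t assume t: "t \<in> {..<N}"
      have xt1: "a * N + t < (a+1) * N" using t by simp
      have xt2: "(a+1) * N \<le> n * N" using a by (intro mult_le_mono1) simp
      have xt: "a * N + t < n * N" using xt1 xt2 by linarith
      have d1: "(a*N+t) div N = a" using t by auto
      show "kron U (1\<^sub>m N) $$ (a*N+t,a*N+t) = U $$ (a,a)"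
        using kron_id_index[of "a*N+t" U N "a*N+t"] xt U d1 by auto
    qed
    then show "(\<Prod>t<N. kron U (1\<^sub>m N) $$ (a*N+t,a*N+t)) = U $$ (a,a) ^ N" by simp
  qed
  also have "\<dots> = (\<Prod>a<n. U $$ (a,a)) ^ N" by (simp add: prod_power_distrib)
  also have "(\<Prod>a<n. U $$ (a,a)) = det U"
    using det_upper_triangular[OF ut U] prod_list_diag_prod[of U] U by (simp add: atLeast0LessThan carrier_matD)
  finally show ?thesis .
qed

lemma shift_similar: fixes A :: "real mat" assumes A: "A \<in> carrier_mat n n" and U: "U \<in> carrier_mat n n"
  and P: "P \<in> carrier_mat n n" and Q: "Q \<in> carrier_mat n n"
  and PQ: "P * Q = 1\<^sub>m n" and AU: "A = P * U * Q"
  shows "x \<cdot>\<^sub>m 1\<^sub>m n - A = P * (x \<cdot>\<^sub>m 1\<^sub>m n - U) * Q"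
proof -
  have "P * (x \<cdot>\<^sub>m 1\<^sub>m n - U) = x \<cdot>\<^sub>m P - P * U"
  proof -
    have x1: "x \<cdot>\<^sub>m 1\<^sub>m n \<in> carrier_mat n n" by simp
    have "P * (x \<cdot>\<^sub>m 1\<^sub>m n - U) = P * (x \<cdot>\<^sub>m 1\<^sub>m n) - P * U"
      by (rule mult_minus_distrib_mat[OF P x1 U])
    also have "P * (x \<cdot>\<^sub>m 1\<^sub>m n) = x \<cdot>\<^sub>m (P * 1\<^sub>m n)"
      using mult_smult_distrib[OF P, of "1\<^sub>m n" n x] by simp
    also have "P * 1\<^sub>m n = P" using P by simp
    finally show ?thesis .
  qed
  then have "P * (x \<cdot>\<^sub>m 1\<^sub>m n - U) * Q = (x \<cdot>\<^sub>m P - P * U) * Q" by simp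
  also have "\<dots> = x \<cdot>\<^sub>m (P * Q) - P * U * Q"
    using P U Q by (simp add: minus_mult_distrib_mat[of _ n n] mult_smult_assoc_mat[of P n n])
  finally show ?thesis using PQ AU by simp
qed

lemma det_kron_split: assumes A: "A \<in> carrier_mat n n"
  and split: "char_poly A = (\<Prod>a\<leftarrow>es. [:- a, 1:])"
  shows "det (kron (x \<cdot>\<^sub>m 1\<^sub>m n - A) (1\<^sub>m N)) = det (x \<cdot>\<^sub>m 1\<^sub>m n - A) ^ N"
proof -
  obtain U where U: "U \<in> carrier_mat n n" and ut: "upper_triangular U" and sim: "similar_mat A U"
    using schur_decomposition_exists[OF A split] by blast
  obtain P Q where w: "similar_mat_wit A U P Q" using sim unfolding similar_mat_def by blast
  have P: "P \<in> carrier_mat n n" and Q: "Q \<in> carrier_mat n n" and PQ: "P * Q = 1\<^sub>m n"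
    and AU: "A = P * U * Q"
    using w A unfolding similar_mat_wit_def Let_def by auto
  define B where "B = x \<cdot>\<^sub>m 1\<^sub>m n - U"
  have B: "B \<in> carrier_mat n n" using U unfolding B_def by auto
  have utB: "upper_triangular B" using ut U unfolding B_def upper_triangular_def by auto
  have eq: "x \<cdot>\<^sub>m 1\<^sub>m n - A = P * B * Q"
    unfolding B_def by (rule shift_similar[OF A U P Q PQ AU])
  have kP: "kron P (1\<^sub>m N) \<in> carrier_mat (n*N) (n*N)" using kron_carrier_mat[OF P, of "1\<^sub>m N" N N] by simp
  have kQ: "kron Q (1\<^sub>m N) \<in> carrier_mat (n*N) (n*N)" using kron_carrier_mat[OF Q, of "1\<^sub>m N" N N] by simp
  have kB: "kron B (1\<^sub>m N) \<in> carrier_mat (n*N) (n*N)" using kron_carrier_mat[OF B, of "1\<^sub>m N" N N] by simp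
  have PB: "P * B \<in> carrier_mat n n" using P B by auto
  have "kron (P * B * Q) (1\<^sub>m N) = kron (P * B) (1\<^sub>m N) * kron Q (1\<^sub>m N)"
    using kron_mult_id[OF PB Q] by simp
  also have "kron (P * B) (1\<^sub>m N) = kron P (1\<^sub>m N) * kron B (1\<^sub>m N)"
    using kron_mult_id[OF P B] by simp
  finally have k: "kron (P * B * Q) (1\<^sub>m N) = kron P (1\<^sub>m N) * kron B (1\<^sub>m N) * kron Q (1\<^sub>m N)" .
  have dPQ: "det (kron P (1\<^sub>m N)) * det (kron Q (1\<^sub>m N)) = 1"
  proof -
    have "det (kron P (1\<^sub>m N)) * det (kron Q (1\<^sub>m N)) = det (kron P (1\<^sub>m N) * kron Q (1\<^sub>m N))"
      using det_mult[OF kP kQ] by simp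
    also have "\<dots> = 1" using kron_mult_id[OF P Q] PQ kron_id_one by simp
    finally show ?thesis .
  qed
  have dPQ1: "det P * det Q = 1" using det_mult[OF P Q] PQ by simp
  have "det (kron (x \<cdot>\<^sub>m 1\<^sub>m n - A) (1\<^sub>m N)) = det (kron P (1\<^sub>m N)) * det (kron B (1\<^sub>m N)) * det (kron Q (1\<^sub>m N))"
    unfolding eq k using det_mult[OF mult_carrier_mat[OF kP kB] kQ] det_mult[OF kP kB] by simp
  also have "\<dots> = det (kron B (1\<^sub>m N))" using dPQ by (simp add: ac_simps)
  also have "\<dots> = det B ^ N" by (rule det_kron_upper[OF B utB])
  also have "det B = det (x \<cdot>\<^sub>m 1\<^sub>m n - A)"
    unfolding eq using det_mult[OF PB Q] det_mult[OF P B] dPQ1 by (simp add: ac_simps)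
  finally show ?thesis .
qed



lemma poly_char_poly_det: assumes A: "(A :: real mat) \<in> carrier_mat n n"
  shows "poly (char_poly A) x = det (x \<cdot>\<^sub>m 1\<^sub>m n - A)"
proof -
  have "- char_matrix A x = x \<cdot>\<^sub>m 1\<^sub>m n - A"
    using A unfolding char_matrix_def by (intro eq_matI) auto
  then show ?thesis using char_poly_matrix[OF A, of x] by simp
qed

lemma ones_mult: "ones_mat 1 n * ones_mat n 1 = real n \<cdot>\<^sub>m 1\<^sub>m 1"
  unfolding ones_mat_def by (intro eq_matI) (auto simp: scalar_prod_def row_def col_def)

lemma smult_mult_smult: assumes "A \<in> carrier_mat a c" "B \<in> carrier_mat c d"
  shows "(p \<cdot>\<^sub>m A) * (q \<cdot>\<^sub>m B) = (p * q :: real) \<cdot>\<^sub>m (A * B)"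
  using assms by (intro eq_matI) (auto simp: scalar_prod_def row_def col_def sum_distrib_left ac_simps)

lemma schur_step:
  fixes M A0 :: "real mat" and b lam x :: real
  assumes M: "M \<in> carrier_mat N N" and A0: "A0 \<in> carrier_mat n n"
    and row: "A0 * ones_mat n 1 = lam \<cdot>\<^sub>m ones_mat n 1"
    and x: "x \<noteq> lam"
  defines "C \<equiv> four_block_mat M (b \<cdot>\<^sub>m kron (ones_mat 1 n) (1\<^sub>m N))
                       (b \<cdot>\<^sub>m kron (ones_mat n 1) (1\<^sub>m N))
                       (kron A0 (1\<^sub>m N))"
  shows "det (x \<cdot>\<^sub>m 1\<^sub>m (N + n * N) - C) =
    det ((x - real n * b^2 / (x - lam)) \<cdot>\<^sub>m 1\<^sub>m N - M) * det (kron (x \<cdot>\<^sub>m 1\<^sub>m n - A0) (1\<^sub>m N))"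
proof -
  define K1 where "K1 = kron (ones_mat 1 n) (1\<^sub>m N)"
  define K2 where "K2 = kron (ones_mat n 1) (1\<^sub>m N)"
  define D' where "D' = kron (x \<cdot>\<^sub>m 1\<^sub>m n - A0) (1\<^sub>m N)"
  define Y where "Y = (b / (x - lam)) \<cdot>\<^sub>m K2"
  have o1: "ones_mat 1 n \<in> carrier_mat 1 n" and o2: "ones_mat n 1 \<in> carrier_mat n 1"
    unfolding ones_mat_def by auto
  have K1: "K1 \<in> carrier_mat N (n*N)" unfolding K1_def using kron_carrier_mat[OF o1, of "1\<^sub>m N" N N] by simp
  have K2: "K2 \<in> carrier_mat (n*N) N" unfolding K2_def using kron_carrier_mat[OF o2, of "1\<^sub>m N" N N] by simp
  have xA: "x \<cdot>\<^sub>m 1\<^sub>m n - A0 \<in> carrier_mat n n" using A0 by auto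
  have D': "D' \<in> carrier_mat (n*N) (n*N)" unfolding D'_def using kron_carrier_mat[OF xA, of "1\<^sub>m N" N N] by simp
  have Y: "Y \<in> carrier_mat (n*N) N" unfolding Y_def using K2 by simp
  have kA0: "kron A0 (1\<^sub>m N) \<in> carrier_mat (n*N) (n*N)" using kron_carrier_mat[OF A0, of "1\<^sub>m N" N N] by simp
  have Deq: "D' = x \<cdot>\<^sub>m 1\<^sub>m (n*N) - kron A0 (1\<^sub>m N)"
    unfolding D'_def using kron_minus_id[of "x \<cdot>\<^sub>m 1\<^sub>m n" n n A0 N] A0
    by (simp add: kron_smult_id kron_id_one)
  have xM: "x \<cdot>\<^sub>m 1\<^sub>m N - M \<in> carrier_mat N N" using M by auto
  have L: "x \<cdot>\<^sub>m 1\<^sub>m (N + n * N) - C = four_block_mat (x \<cdot>\<^sub>m 1\<^sub>m N - M) ((-b) \<cdot>\<^sub>m K1) ((-b) \<cdot>\<^sub>m K2) D'"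
    unfolding C_def Deq K1_def[symmetric] K2_def[symmetric]
    using M K1 K2 kA0 A0 by (intro eq_matI) (auto simp: carrier_matD)
  define R where "R = four_block_mat (1\<^sub>m N) (0\<^sub>m N (n*N)) Y (1\<^sub>m (n*N))"
  have R: "R \<in> carrier_mat (N + n*N) (N + n*N)" unfolding R_def by simp
  have detR: "det R = 1" unfolding R_def
    by (subst det_four_block_mat_upper_right_zero[of _ N _ "n*N"], insert Y, auto)
  have Lc: "four_block_mat (x \<cdot>\<^sub>m 1\<^sub>m N - M) ((-b) \<cdot>\<^sub>m K1) ((-b) \<cdot>\<^sub>m K2) D' \<in> carrier_mat (N + n*N) (N + n*N)"
    using xM D' by simp
  have K1K2: "K1 * K2 = real n \<cdot>\<^sub>m 1\<^sub>m N"
  proof -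
    have "K1 * K2 = kron (ones_mat 1 n * ones_mat n 1) (1\<^sub>m N)"
      unfolding K1_def K2_def by (rule kron_mult_id[OF o1 o2])
    also have "\<dots> = real n \<cdot>\<^sub>m 1\<^sub>m N" unfolding ones_mult kron_smult_id kron_id_one by simp
    finally show ?thesis .
  qed
  have D'K2: "D' * K2 = (x - lam) \<cdot>\<^sub>m K2"
  proof -
    have "D' * K2 = kron ((x \<cdot>\<^sub>m 1\<^sub>m n - A0) * ones_mat n 1) (1\<^sub>m N)"
      unfolding D'_def K2_def by (rule kron_mult_id[OF xA o2])
    also have "(x \<cdot>\<^sub>m 1\<^sub>m n - A0) * ones_mat n 1 = (x - lam) \<cdot>\<^sub>m ones_mat n 1"
    proof -
      have "(x \<cdot>\<^sub>m 1\<^sub>m n - A0) * ones_mat n 1 = (x \<cdot>\<^sub>m 1\<^sub>m n) * ones_mat n 1 - A0 * ones_mat n 1"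
        by (rule minus_mult_distrib_mat[of _ n n], insert A0 o2, auto)
      also have "(x \<cdot>\<^sub>m 1\<^sub>m n) * ones_mat n 1 = x \<cdot>\<^sub>m ones_mat n 1"
        using mult_smult_assoc_mat[of "1\<^sub>m n" n n "ones_mat n 1" 1 x] o2 by simp
      finally show ?thesis unfolding row
        by (intro eq_matI) (auto simp: ones_mat_def algebra_simps)
    qed
    also have "kron ((x - lam) \<cdot>\<^sub>m ones_mat n 1) (1\<^sub>m N) = (x - lam) \<cdot>\<^sub>m K2"
      unfolding K2_def kron_smult_id ..
    finally show ?thesis .
  qed
  have prod: "four_block_mat (x \<cdot>\<^sub>m 1\<^sub>m N - M) ((-b) \<cdot>\<^sub>m K1) ((-b) \<cdot>\<^sub>m K2) D' * R
     = four_block_mat ((x - real n * b^2 / (x - lam)) \<cdot>\<^sub>m 1\<^sub>m N - M) ((-b) \<cdot>\<^sub>m K1) (0\<^sub>m (n*N) N) D'"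
  proof -
    have "four_block_mat (x \<cdot>\<^sub>m 1\<^sub>m N - M) ((-b) \<cdot>\<^sub>m K1) ((-b) \<cdot>\<^sub>m K2) D' * R
      = four_block_mat ((x \<cdot>\<^sub>m 1\<^sub>m N - M) * 1\<^sub>m N + ((-b) \<cdot>\<^sub>m K1) * Y)
          ((x \<cdot>\<^sub>m 1\<^sub>m N - M) * 0\<^sub>m N (n*N) + ((-b) \<cdot>\<^sub>m K1) * 1\<^sub>m (n*N))
          (((-b) \<cdot>\<^sub>m K2) * 1\<^sub>m N + D' * Y) (((-b) \<cdot>\<^sub>m K2) * 0\<^sub>m N (n*N) + D' * 1\<^sub>m (n*N))"
      unfolding R_def
      by (rule mult_four_block_mat, insert xM K1 K2 D' Y, auto)
    also have "((-b) \<cdot>\<^sub>m K1) * Y = (-b * (b / (x - lam)) * real n) \<cdot>\<^sub>m 1\<^sub>m N"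
      unfolding Y_def smult_mult_smult[OF K1 K2] K1K2 by (intro eq_matI) auto
    also have "D' * Y = b \<cdot>\<^sub>m K2"
    proof -
      have "D' * Y = (b / (x - lam)) \<cdot>\<^sub>m (D' * K2)" unfolding Y_def
        by (rule mult_smult_distrib[OF D' K2])
      also have "\<dots> = b \<cdot>\<^sub>m K2" unfolding D'K2 using x
        by (intro eq_matI) auto
      finally show ?thesis .
    qed
    also have "((x \<cdot>\<^sub>m 1\<^sub>m N - M) * 1\<^sub>m N + (-b * (b / (x - lam)) * real n) \<cdot>\<^sub>m 1\<^sub>m N)
       = (x - real n * b^2 / (x - lam)) \<cdot>\<^sub>m 1\<^sub>m N - M"
      using M by (intro eq_matI) (auto simp: power2_eq_square algebra_simps)
    also have "(x \<cdot>\<^sub>m 1\<^sub>m N - M) * 0\<^sub>m N (n*N) + ((-b) \<cdot>\<^sub>m K1) * 1\<^sub>m (n*N) = (-b) \<cdot>\<^sub>m K1"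
      using M K1 by (intro eq_matI) auto
    also have "((-b) \<cdot>\<^sub>m K2) * 1\<^sub>m N + b \<cdot>\<^sub>m K2 = 0\<^sub>m (n*N) N"
      using K2 by (intro eq_matI) auto
    also have "((-b) \<cdot>\<^sub>m K2) * 0\<^sub>m N (n*N) + D' * 1\<^sub>m (n*N) = D'"
      using K2 D' by (intro eq_matI) auto
    finally show ?thesis .
  qed
  have "det (x \<cdot>\<^sub>m 1\<^sub>m (N + n * N) - C) = det (x \<cdot>\<^sub>m 1\<^sub>m (N + n * N) - C) * det R"
    using detR by simp
  also have "\<dots> = det ((x \<cdot>\<^sub>m 1\<^sub>m (N + n * N) - C) * R)"
    unfolding L using det_mult[OF Lc R] by simp
  also have "\<dots> = det ((x - real n * b^2 / (x - lam)) \<cdot>\<^sub>m 1\<^sub>m N - M) * det D'"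
    unfolding L prod
    by (rule det_four_block_mat_lower_left_zero[of _ N _ "n*N"], insert M K1 D', auto)
  finally show ?thesis unfolding D'_def .
qed



lemma degree_lin_prod: "degree (\<Prod>a\<in>#S. [:- (a::real), 1:]) = size S"
proof (induction S)
  case (add x S)
  have nz: "(\<Prod>a\<in>#S. [:- a, 1:]) \<noteq> 0" by (auto simp: prod_mset_zero_iff)
  have "degree (\<Prod>a\<in>#add_mset x S. [:- a, 1:]) = degree ([:- x, 1:] * (\<Prod>a\<in>#S. [:- a, 1:]))" by simp
  also have "\<dots> = degree [:- x, 1:] + degree (\<Prod>a\<in>#S. [:- a, 1:])"
    by (rule degree_mult_eq) (use nz in auto)
  also have "\<dots> = size (add_mset x S)" using add.IH by simp
  finally show ?case .
qed simp

lemma poly_eq_except: fixes p q :: "real poly"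
  assumes "\<And>x. x \<noteq> a \<Longrightarrow> poly p x = poly q x"
  shows "p = q"
proof (rule ccontr)
  assume "p \<noteq> q"
  then have "p - q \<noteq> 0" by simp
  then have fin: "finite {x. poly (p - q) x = 0}" by (rule poly_roots_finite)
  have "UNIV - {a} \<subseteq> {x. poly (p - q) x = 0}" using assms by auto
  then have "finite (UNIV - {a} :: real set)" using fin finite_subset by blast
  then show False using infinite_UNIV_char_0[where 'a=real] by simp
qed

lemma split_list_of_mset: "\<exists>es. (\<Prod>a\<in>#X. [:- (a::real), 1:]) = (\<Prod>a\<leftarrow>es. [:- a, 1:])"
proof -
  obtain es where "mset es = X" using ex_mset by blast
  then show ?thesis
    by (intro exI[of _ es]) (metis mset_map prod_mset_prod_list)
qed

definition Psi :: "(real \<Rightarrow> real) \<Rightarrow> (real \<Rightarrow> real) \<Rightarrow> real multiset \<Rightarrow> real multiset" where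
  "Psi fp fm S = (\<Sum>y\<in>#S. {#fp y, fm y#})"

lemma prod_Psi: "(\<Prod>a\<in>#Psi fp fm S. f a) = (\<Prod>y\<in>#S. f (fp y) * f (fm y))"
  unfolding Psi_def by (induction S) (auto simp: mult.assoc)

lemma phi_identity:
  fixes x mu lam c :: real
  assumes c: "c \<ge> 0" and x: "x \<noteq> lam"
  defines "fp \<equiv> (mu + lam + sqrt ((mu - lam)\<^sup>2 + 4 * c)) / 2"
  defines "fm \<equiv> (mu + lam - sqrt ((mu - lam)\<^sup>2 + 4 * c)) / 2"
  shows "(x - c / (x - lam) - mu) * (x - lam) = (x - fp) * (x - fm)"
proof -
  have s: "(sqrt ((mu - lam)\<^sup>2 + 4 * c))\<^sup>2 = (mu - lam)\<^sup>2 + 4 * c"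
    using c by (intro real_sqrt_pow2) simp
  have "(x - fp) * (x - fm) = x^2 - (mu + lam) * x + ((mu+lam)^2 - (sqrt ((mu - lam)\<^sup>2 + 4 * c))\<^sup>2) / 4"
    unfolding fp_def fm_def by (simp add: field_simps power2_eq_square)
  also have "\<dots> = x^2 - (mu + lam) * x + mu * lam - c" unfolding s by (simp add: field_simps power2_eq_square)
  also have "\<dots> = (x - c / (x - lam) - mu) * (x - lam)" using x by (simp add: field_simps power2_eq_square)
  finally show ?thesis by simp
qed

lemma char_step:
  fixes M A0 :: "real mat" and b lam :: real and S L :: "real multiset"
  assumes M: "M \<in> carrier_mat N N" and A0: "A0 \<in> carrier_mat n n"
    and row: "A0 * ones_mat n 1 = lam \<cdot>\<^sub>m ones_mat n 1"
    and cM: "char_poly M = (\<Prod>a\<in>#S. [:- a, 1:])"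
    and cA: "char_poly A0 = (\<Prod>a\<in>#(add_mset lam L). [:- a, 1:])"
  defines "fp \<equiv> (\<lambda>y. (y + lam + sqrt ((y - lam)\<^sup>2 + 4 * real n * b\<^sup>2)) / 2)"
  defines "fm \<equiv> (\<lambda>y. (y + lam - sqrt ((y - lam)\<^sup>2 + 4 * real n * b\<^sup>2)) / 2)"
  defines "C \<equiv> four_block_mat M (b \<cdot>\<^sub>m kron (ones_mat 1 n) (1\<^sub>m N))
                       (b \<cdot>\<^sub>m kron (ones_mat n 1) (1\<^sub>m N))
                       (kron A0 (1\<^sub>m N))"
  shows "char_poly C = (\<Prod>a\<in>#(Psi fp fm S + repeat_mset N L). [:- a, 1:])"
proof (rule poly_eq_except[of lam])
  fix x assume x: "x \<noteq> lam"
  have o1: "ones_mat 1 n \<in> carrier_mat 1 n" and o2: "ones_mat n 1 \<in> carrier_mat n 1"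
    unfolding ones_mat_def by auto
  have Cc: "C \<in> carrier_mat (N + n*N) (N + n*N)" unfolding C_def
    using M kron_carrier_mat[OF A0, of "1\<^sub>m N" N N] by simp
  have sizeS: "size S = N"
    using degree_monic_char_poly[OF M] cM degree_lin_prod[of S] by simp
  obtain es where es: "char_poly A0 = (\<Prod>a\<leftarrow>es. [:- a, 1:])"
    using split_list_of_mset cA by metis
  define y where "y = x - real n * b^2 / (x - lam)"
  have "poly (char_poly C) x = det (x \<cdot>\<^sub>m 1\<^sub>m (N + n * N) - C)"
    by (rule poly_char_poly_det[OF Cc])
  also have "\<dots> = det (y \<cdot>\<^sub>m 1\<^sub>m N - M) * det (kron (x \<cdot>\<^sub>m 1\<^sub>m n - A0) (1\<^sub>m N))"
    unfolding C_def y_def by (rule schur_step[OF M A0 row x])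
  also have "det (kron (x \<cdot>\<^sub>m 1\<^sub>m n - A0) (1\<^sub>m N)) = det (x \<cdot>\<^sub>m 1\<^sub>m n - A0) ^ N"
    by (rule det_kron_split[OF A0 es])
  also have "det (x \<cdot>\<^sub>m 1\<^sub>m n - A0) = poly (char_poly A0) x"
    by (rule poly_char_poly_det[OF A0, symmetric])
  also have "det (y \<cdot>\<^sub>m 1\<^sub>m N - M) = poly (char_poly M) y"
    by (rule poly_char_poly_det[OF M, symmetric])
  also have "poly (char_poly A0) x = (x - lam) * (\<Prod>a\<in>#L. x - a)"
    unfolding cA by (simp add: poly_prod_mset left_diff_distrib)
  also have "poly (char_poly M) y = (\<Prod>a\<in>#S. y - a)"
    unfolding cM by (simp add: poly_prod_mset)
  also have "(\<Prod>a\<in>#S. y - a) * ((x - lam) * (\<Prod>a\<in>#L. x - a)) ^ N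
     = (\<Prod>a\<in>#S. (y - a) * (x - lam)) * (\<Prod>a\<in>#L. x - a) ^ N"
    unfolding power_mult_distrib sizeS[symmetric]
    by (induction S) (auto simp: ac_simps)
  also have "(\<Prod>a\<in>#S. (y - a) * (x - lam)) = (\<Prod>a\<in>#S. (x - fp a) * (x - fm a))"
  proof -
    have c: "real n * b\<^sup>2 \<ge> 0" by simp
    have pt: "(y - a) * (x - lam) = (x - fp a) * (x - fm a)" for a
      unfolding y_def fp_def fm_def using phi_identity[OF c x, of a]
      by (simp add: mult.assoc)
    show ?thesis by (simp add: pt)
  qed
  also have "\<dots> * (\<Prod>a\<in>#L. x - a) ^ N = poly (\<Prod>a\<in>#(Psi fp fm S + repeat_mset N L). [:- a, 1:]) x"
  proof -
    have r: "(\<Prod>a\<in>#repeat_mset N L. x - a) = (\<Prod>a\<in>#L. x - a) ^ N"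
      by (induction N) auto
    have pl: "\<And>a. poly [:-a,1:] x = x - a" by simp
    have "poly (\<Prod>a\<in>#(Psi fp fm S + repeat_mset N L). [:- a, 1:]) x = (\<Prod>a\<in>#(Psi fp fm S + repeat_mset N L). x - a)"
      by (simp only: poly_prod_mset pl)
    also have "\<dots> = (\<Prod>a\<in>#Psi fp fm S. x - a) * (\<Prod>a\<in>#repeat_mset N L. x - a)"
      by (simp only: image_mset_union prod_mset.union)
    also have "\<dots> = (\<Prod>a\<in>#S. (x - fp a) * (x - fm a)) * (\<Prod>a\<in>#L. x - a) ^ N"
      by (simp only: prod_Psi r)
    finally show ?thesis by simp
  qed
  finally show "poly (char_poly C) x = poly (\<Prod>a\<in>#(Psi fp fm S + repeat_mset N L). [:- a, 1:]) x" .
qed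



lemma card_filter_sum: "finite A \<Longrightarrow> card {x\<in>A. P x} = (\<Sum>x\<in>A. if P x then 1 else 0)"
  by (simp add: sum.inter_filter[symmetric])

lemma regular_row_sum:
  assumes reg: "kr_regular k r n E" and i: "i < n"
  shows "(\<Sum>j\<in>{0..<n}-{i}. card {e\<in>E. i \<in> e \<and> j \<in> e}) = r * (k - 1)"
proof -
  have sub: "\<And>e. e \<in> E \<Longrightarrow> e \<subseteq> {0..<n}" and ck: "\<And>e. e \<in> E \<Longrightarrow> card e = k"
    and cr: "card {e\<in>E. i \<in> e} = r"
    using reg i unfolding kr_regular_def hypergraph_def by auto
  have finE: "finite E"
  proof (rule finite_subset)
    show "E \<subseteq> Pow {0..<n}" using sub by auto
  qed simp
  have "(\<Sum>j\<in>{0..<n}-{i}. card {e\<in>E. i \<in> e \<and> j \<in> e})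
      = (\<Sum>j\<in>{0..<n}-{i}. \<Sum>e\<in>E. if i \<in> e \<and> j \<in> e then 1 else 0)"
    using finE by (simp add: card_filter_sum)
  also have "\<dots> = (\<Sum>e\<in>E. \<Sum>j\<in>{0..<n}-{i}. if i \<in> e \<and> j \<in> e then 1 else 0)"
    by (rule sum.swap)
  also have "\<dots> = (\<Sum>e\<in>E. if i \<in> e then k - 1 else 0)"
  proof (rule sum.cong[OF refl])
    fix e assume e: "e \<in> E"
    have fe: "finite e" using sub[OF e] finite_subset by blast
    show "(\<Sum>j\<in>{0..<n}-{i}. if i \<in> e \<and> j \<in> e then 1 else 0) = (if i \<in> e then k - 1 else 0)"
    proof (cases "i \<in> e")
      case True
      have "(\<Sum>j\<in>{0..<n}-{i}. if i \<in> e \<and> j \<in> e then 1 else 0) = card {j\<in>{0..<n}-{i}. j \<in> e}"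
        using True card_filter_sum[of "{0..<n}-{i}" "\<lambda>j. j \<in> e"] by simp
      also have "{j\<in>{0..<n}-{i}. j \<in> e} = e - {i}" using sub[OF e] by auto
      also have "card (e - {i}) = k - 1" using True fe ck[OF e] by simp
      finally show ?thesis using True by simp
    qed simp
  qed
  also have "\<dots> = (\<Sum>e\<in>{e\<in>E. i \<in> e}. k - 1)"
    using finE sum.inter_filter[of E "\<lambda>_. k - 1" "\<lambda>e. i \<in> e"] by simp
  also have "\<dots> = r * (k - 1)" using cr by simp
  finally show ?thesis .
qed

lemma hyp_adj_carrier: "hyp_adj n E \<in> carrier_mat n n"
  unfolding hyp_adj_def by simp

lemma hyp_adj_row:
  assumes reg: "kr_regular k r n E"
  shows "hyp_adj n E * ones_mat n 1 = real (r * (k - 1)) \<cdot>\<^sub>m ones_mat n 1"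
proof (rule eq_matI)
  fix i j assume i: "i < dim_row (real (r * (k - 1)) \<cdot>\<^sub>m ones_mat n 1)"
    and j: "j < dim_col (real (r * (k - 1)) \<cdot>\<^sub>m ones_mat n 1)"
  have i: "i < n" and j0: "j = 0" using i j unfolding ones_mat_def by auto
  have "(hyp_adj n E * ones_mat n 1) $$ (i, j) = (\<Sum>l\<in>{0..<n}. hyp_adj n E $$ (i, l))"
    using i j0 unfolding ones_mat_def hyp_adj_def by (simp add: scalar_prod_def row_def col_def)
  also have "\<dots> = (\<Sum>l\<in>{0..<n}. if i = l then 0 else real (card {e\<in>E. i \<in> e \<and> l \<in> e}))"
    using i unfolding hyp_adj_def by (intro sum.cong) auto
  also have "\<dots> = (\<Sum>l\<in>{0..<n}-{i}. real (card {e\<in>E. i \<in> e \<and> l \<in> e}))"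
    using i by (simp add: sum.remove[of "{0..<n}" i] )
  also have "\<dots> = real (r * (k - 1))"
    using regular_row_sum[OF reg i] by (metis of_nat_sum)
  finally show "(hyp_adj n E * ones_mat n 1) $$ (i, j) = (real (r * (k - 1)) \<cdot>\<^sub>m ones_mat n 1) $$ (i, j)"
    using i j0 unfolding ones_mat_def by simp
qed (auto simp: ones_mat_def hyp_adj_def)

lemma corona_carrier: assumes A: "A \<in> carrier_mat n n"
  shows "corona_iter A b m \<in> carrier_mat (n * (n+1)^m) (n * (n+1)^m)"
proof (induction m)
  case 0 then show ?case using A by simp
next
  case (Suc m)
  let ?N = "n * (n+1)^m"
  have kA: "kron A (1\<^sub>m ?N) \<in> carrier_mat (n * ?N) (n * ?N)" using kron_carrier_mat[OF A, of "1\<^sub>m ?N" ?N ?N] by simp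
  have "corona_iter A b (Suc m) \<in> carrier_mat (?N + n * ?N) (?N + n * ?N)"
    using Suc kA A by (simp add: Let_def carrier_matD)
  moreover have "?N + n * ?N = n * (n+1)^Suc m" by (simp add: algebra_simps)
  ultimately show ?case by simp
qed

lemma mset_sum_nth: "mset xs = (\<Sum>i<length xs. {#xs ! i#})"
proof (induction xs)
  case (Cons x xs)
  then show ?case by (simp add: sum.lessThan_Suc_shift del: sum.lessThan_Suc)
qed simp

lemma Psi_add: "Psi fp fm (X + Y) = Psi fp fm X + Psi fp fm Y"
  unfolding Psi_def by simp

lemma Psi_zero[simp]: "Psi fp fm {#} = {#}" unfolding Psi_def by simp

lemma Psi_sum: "Psi fp fm (\<Sum>i\<in>A. f i) = (\<Sum>i\<in>A. Psi fp fm (f i))"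
  by (induction A rule: infinite_finite_induct) (auto simp: Psi_add)

lemma Psi_repeat: "Psi fp fm (repeat_mset c X) = repeat_mset c (Psi fp fm X)"
  by (induction c) (auto simp: Psi_add)

lemma repeat_sum: "repeat_mset c (\<Sum>i\<in>A. f i) = (\<Sum>i\<in>A. repeat_mset c (f i))"
  by (induction A rule: infinite_finite_induct) (auto simp: repeat_mset_distrib2)

lemma Phi_Suc_Psi: "Phi fp fm (Suc j) x = Psi fp fm (Phi fp fm j x)"
  unfolding Psi_def by simp



lemma main_ind:
  fixes n k r :: nat and E :: "nat set set" and lam :: "real list" and b :: real
  assumes reg: "kr_regular k r n E"
    and len: "length lam = n"
    and lam1: "lam ! 0 = real (r * (k - 1))"
    and spec: "is_spectrum (hyp_adj n E) (mset lam)"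
    and n0: "n > 0"
  defines "\<phi>p \<equiv> (\<lambda>x::real. (x + real (r * (k - 1)) + sqrt ((x - real (r * (k - 1)))\<^sup>2 + 4 * real n * b\<^sup>2)) / 2)"
  defines "\<phi>m \<equiv> (\<lambda>x::real. (x + real (r * (k - 1)) - sqrt ((x - real (r * (k - 1)))\<^sup>2 + 4 * real n * b\<^sup>2)) / 2)"
  shows "is_spectrum (corona_iter (hyp_adj n E) b m)
           ((\<Sum>i<n. Phi \<phi>p \<phi>m m (lam ! i))
            + (\<Sum>j<m. \<Sum>i\<in>{1..<n}. repeat_mset (n * (n + 1) ^ (m - j - 1)) (Phi \<phi>p \<phi>m j (lam ! i))))"
proof (induction m)
  case 0
  have "(\<Sum>i<n. Phi \<phi>p \<phi>m 0 (lam ! i)) = mset lam" using mset_sum_nth[of lam] len by simp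
  then show ?case using spec by simp
next
  case (Suc m)
  define A0 where "A0 = hyp_adj n E"
  define M where "M = corona_iter A0 b m"
  define N where "N = n * (n+1)^m"
  define L where "L = (\<Sum>i\<in>{1..<n}. {#lam ! i#})"
  define S where "S = (\<Sum>i<n. Phi \<phi>p \<phi>m m (lam ! i))
            + (\<Sum>j<m. \<Sum>i\<in>{1..<n}. repeat_mset (n * (n + 1) ^ (m - j - 1)) (Phi \<phi>p \<phi>m j (lam ! i)))"
  have A0: "A0 \<in> carrier_mat n n" unfolding A0_def by (rule hyp_adj_carrier)
  have Mc: "M \<in> carrier_mat N N" unfolding M_def N_def by (rule corona_carrier[OF A0])
  have row: "A0 * ones_mat n 1 = real (r * (k - 1)) \<cdot>\<^sub>m ones_mat n 1"
    unfolding A0_def by (rule hyp_adj_row[OF reg])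
  have cM: "char_poly M = (\<Prod>a\<in>#S. [:- a, 1:])"
    using Suc.IH unfolding M_def S_def A0_def is_spectrum_def .
  have ml: "mset lam = add_mset (real (r * (k - 1))) L"
  proof -
    have "mset lam = (\<Sum>i<n. {#lam ! i#})" using mset_sum_nth[of lam] len by simp
    also have "{..<n} = insert 0 {1..<n}" using n0 by auto
    also have "(\<Sum>i\<in>insert 0 {1..<n}. {#lam ! i#}) = {#lam ! 0#} + L"
      unfolding L_def by (subst sum.insert) auto
    finally show ?thesis using lam1 by simp
  qed
  have cA: "char_poly A0 = (\<Prod>a\<in>#(add_mset (real (r * (k - 1))) L). [:- a, 1:])"
    using spec unfolding is_spectrum_def A0_def ml .
  have step: "char_poly (corona_iter A0 b (Suc m)) = (\<Prod>a\<in>#(Psi \<phi>p \<phi>m S + repeat_mset N L). [:- a, 1:])"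
  proof -
    have dM: "dim_row M = N" and dA: "dim_row A0 = n" using Mc A0 by auto
    have "corona_iter A0 b (Suc m) = four_block_mat M (b \<cdot>\<^sub>m kron (ones_mat 1 n) (1\<^sub>m N))
                       (b \<cdot>\<^sub>m kron (ones_mat n 1) (1\<^sub>m N))
                       (kron A0 (1\<^sub>m N))"
      by (simp add: Let_def M_def[symmetric] dM dA)
    then show ?thesis
      using char_step[OF Mc A0 row cM cA, of b] unfolding \<phi>p_def \<phi>m_def by simp
  qed
  have eqS: "Psi \<phi>p \<phi>m S + repeat_mset N L =
     (\<Sum>i<n. Phi \<phi>p \<phi>m (Suc m) (lam ! i))
            + (\<Sum>j<Suc m. \<Sum>i\<in>{1..<n}. repeat_mset (n * (n + 1) ^ (Suc m - j - 1)) (Phi \<phi>p \<phi>m j (lam ! i)))"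
  proof -
    have "Psi \<phi>p \<phi>m S = (\<Sum>i<n. Phi \<phi>p \<phi>m (Suc m) (lam ! i))
       + (\<Sum>j<m. \<Sum>i\<in>{1..<n}. repeat_mset (n * (n + 1) ^ (m - j - 1)) (Phi \<phi>p \<phi>m (Suc j) (lam ! i)))"
      unfolding S_def Psi_add Psi_sum Psi_repeat Phi_Suc_Psi ..
    moreover have "(\<Sum>j<Suc m. \<Sum>i\<in>{1..<n}. repeat_mset (n * (n + 1) ^ (Suc m - j - 1)) (Phi \<phi>p \<phi>m j (lam ! i)))
       = repeat_mset N L + (\<Sum>j<m. \<Sum>i\<in>{1..<n}. repeat_mset (n * (n + 1) ^ (m - j - 1)) (Phi \<phi>p \<phi>m (Suc j) (lam ! i)))"
      unfolding sum.lessThan_Suc_shift L_def repeat_sum N_def by simp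
    ultimately show ?thesis by (simp add: add_ac)
  qed
  show ?case unfolding is_spectrum_def A0_def[symmetric] step eqS ..
qed


theorem theorem5p1:
  fixes n k r :: nat and E :: "nat set set" and lam :: "real list"
  assumes reg: "kr_regular k r n E"
    and len: "length lam = n"
    and lam1: "lam ! 0 = real (r * (k - 1))"
    and spec: "is_spectrum (hyp_adj n E) (mset lam)"
  defines "b \<equiv> real ((n - 1) choose (k - 2))"
  defines "\<phi>p \<equiv> (\<lambda>x::real. (x + real (r * (k - 1)) + sqrt ((x - real (r * (k - 1)))\<^sup>2 + 4 * real n * b\<^sup>2)) / 2)"
  defines "\<phi>m \<equiv> (\<lambda>x::real. (x + real (r * (k - 1)) - sqrt ((x - real (r * (k - 1)))\<^sup>2 + 4 * real n * b\<^sup>2)) / 2)"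
  assumes m: "m \<ge> 1"
  shows "is_spectrum (corona_iter (hyp_adj n E) b (m - 1))
           ((\<Sum>i<n. Phi \<phi>p \<phi>m (m - 1) (lam ! i))
            + (\<Sum>j<m - 1. \<Sum>i\<in>{1..<n}. repeat_mset (n * (n + 1) ^ (m - j - 2)) (Phi \<phi>p \<phi>m j (lam ! i))))"
  proof (cases "n = 0")
  case True
  have c: "corona_iter (hyp_adj n E) b (m - 1) \<in> carrier_mat 0 0"
    using corona_carrier[OF hyp_adj_carrier, of n E b "m - 1"] True by simp
  have "char_poly (corona_iter (hyp_adj n E) b (m - 1)) = 1"
    unfolding char_poly_def by (rule det_dim_zero, rule char_poly_matrix_closed[OF c])
  then show ?thesis unfolding is_spectrum_def using True by simp
next
  case False
  then have n0: "n > 0" by simp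
  have main: "is_spectrum (corona_iter (hyp_adj n E) b (m - 1))
           ((\<Sum>i<n. Phi \<phi>p \<phi>m (m - 1) (lam ! i))
            + (\<Sum>j<m - 1. \<Sum>i\<in>{1..<n}. repeat_mset (n * (n + 1) ^ (m - 1 - j - 1)) (Phi \<phi>p \<phi>m j (lam ! i))))"
    unfolding \<phi>p_def \<phi>m_def by (rule main_ind[OF reg len lam1 spec n0])
  have eq: "(\<Sum>j<m - 1. \<Sum>i\<in>{1..<n}. repeat_mset (n * (n + 1) ^ (m - 1 - j - 1)) (Phi \<phi>p \<phi>m j (lam ! i)))
     = (\<Sum>j<m - 1. \<Sum>i\<in>{1..<n}. repeat_mset (n * (n + 1) ^ (m - j - 2)) (Phi \<phi>p \<phi>m j (lam ! i)))"
    by (rule sum.cong) (auto simp: numeral_2_eq_2)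
  show ?thesis using main unfolding eq .
qed

end
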